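(* Let $\Pi=\{\Pi_\theta\}$ be a partition of a set of paths into pairwise disjoint cells and let $\Theta=\{\theta_0,\dots,\theta_{M-1}\}$ be a set of filling classes $\theta_l=(Z_{\theta_l},\Pi_{\theta_l})$ for cells of $\Pi$, totally ordered by some order. Let $Z_\Theta=\bigcup_l Z_{\theta_l}$, where each PGT $\gamma$ has duration $E_\gamma>0$, minimum separation $t^{\mathrm{minsep}}_\gamma\ge0$ and positive integer minimal allocation $\mathcal{M}_\gamma$. Then for every $t_0$ there exists a valid schedule containing exactly $\mathcal{M}_\gamma$ PGAs of every $\gamma\in Z_\Theta$, all of whose PGAs lie within $[t_0,\,t_0+\tilde{\mathcal{R}}(Z_\Theta)]$, where $$\tilde{\mathcal{R}}(Z_\Theta)=\sum_{\theta_l\in\Theta}R(Z_{\theta_l}).$$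
   Context: A filling class is $\phi=(Z_\phi,\Pi_\phi)$ where $\Pi_\phi$ is a cell of the path partition and $Z_\phi$ is a set of PGTs $\gamma$ with paths $\pi_\gamma\in\Pi_\phi$. For a set of PGTs $Z_\phi=\{\gamma_0,\dots,\gamma_{M-1}\}$ indexed so that $\mathcal{M}_{\gamma_0}\le\dots\le\mathcal{M}_{\gamma_{M-1}}$, with $E_x=E_{\gamma_x}$, $\tau_x=t^{\mathrm{minsep}}_{\gamma_x}$: $n_0=\mathcal{M}_{\gamma_0}-1$, $n_x=\mathcal{M}_{\gamma_x}-\mathcal{M}_{\gamma_{x-1}}$ ($x\ge1$), $c_x=\max(\max_{y\ge x}(E_y+\tau_y),\sum_{y=x}^{M-1}E_y)$, and $R(Z_\phi)=\sum_{x=0}^{M-1}(n_xc_x+E_x)$ ($R(\emptyset)=0$). A PGA of $\gamma$ is a time interval $[s,s+E_\gamma)$ assigned to $\gamma$; a schedule is a finite set of PGAs. A resource conflict occurs if there are PGAs $[s,e)$ of $\gamma$ and $[s',e')$ of $\gamma'$ (distinct PGAs) with $\xi(\pi_\gamma)\cap\xi(\pi_{\gamma'})\ne\emptyset$ and $s\le s'<e$, where $\xi(\pi)$ is the set of vertices on path $\pi$. A minsep violation occurs if two time-consecutive PGAs $[s,e)$, $[s'',e'')$ of the same PGT $\gamma$ satisfy $s''-e<t^{\mathrm{minsep}}_\gamma$. A schedule is valid if no resource conflict and no minsep violation occurs. *)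

theory Defs
  imports Complex_Main
begin

text \<open>A PGT gamma has path path gamma, duration E gamma, minimum separation tau gamma
  and minimal allocation Mc gamma.  xi p is the vertex set of path p.
  A PGA is a pair (gamma, s) standing for the interval [s, s + E gamma).
  A schedule is a finite set of PGAs.\<close>

text \<open>R of a list xs of PGTs, assumed sorted by Mc (index x ranges over 0..<length xs).\<close>
definition R_list :: "('g \<Rightarrow> nat) \<Rightarrow> ('g \<Rightarrow> real) \<Rightarrow> ('g \<Rightarrow> real) \<Rightarrow> 'g list \<Rightarrow> real" where
  "R_list Mc E tau xs =
     (let L = length xs;
          n = (\<lambda>x. if x = 0 then real (Mc (xs ! 0)) - 1
                   else real (Mc (xs ! x)) - real (Mc (xs ! (x - 1))));
          c = (\<lambda>x. max (Max ((\<lambda>y. E (xs ! y) + tau (xs ! y)) ` {x..<L}))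
                        (\<Sum>y = x..<L. E (xs ! y)))
      in (\<Sum>x<L. n x * c x + E (xs ! x)))"

text \<open>R(Z): take an enumeration of the finite set Z ordered nondecreasingly by Mc
  (the value does not depend on how ties are broken); R of the empty set is 0.\<close>
definition R_set :: "('g \<Rightarrow> nat) \<Rightarrow> ('g \<Rightarrow> real) \<Rightarrow> ('g \<Rightarrow> real) \<Rightarrow> 'g set \<Rightarrow> real" where
  "R_set Mc E tau Z =
     R_list Mc E tau (SOME xs. distinct xs \<and> set xs = Z \<and> sorted (map Mc xs))"

definition resource_conflict ::
  "('p \<Rightarrow> 'v set) \<Rightarrow> ('g \<Rightarrow> 'p) \<Rightarrow> ('g \<Rightarrow> real) \<Rightarrow> ('g \<times> real) set \<Rightarrow> bool" where
  "resource_conflict xi path E S \<longleftrightarrow>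
     (\<exists>g s g' s'. (g, s) \<in> S \<and> (g', s') \<in> S \<and> (g, s) \<noteq> (g', s') \<and>
        xi (path g) \<inter> xi (path g') \<noteq> {} \<and> s \<le> s' \<and> s' < s + E g)"

definition minsep_violation ::
  "('g \<Rightarrow> real) \<Rightarrow> ('g \<Rightarrow> real) \<Rightarrow> ('g \<times> real) set \<Rightarrow> bool" where
  "minsep_violation E tau S \<longleftrightarrow>
     (\<exists>g s s''. (g, s) \<in> S \<and> (g, s'') \<in> S \<and> s < s'' \<and>
        \<not> (\<exists>s'. (g, s') \<in> S \<and> s < s' \<and> s' < s'') \<and>
        s'' - (s + E g) < tau g)"

definition valid_schedule ::
  "('p \<Rightarrow> 'v set) \<Rightarrow> ('g \<Rightarrow> 'p) \<Rightarrow> ('g \<Rightarrow> real) \<Rightarrow> ('g \<Rightarrow> real) \<Rightarrow> ('g \<times> real) set \<Rightarrow> bool" where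
  "valid_schedule xi path E tau S \<longleftrightarrow>
     finite S \<and> \<not> resource_conflict xi path E S \<and> \<not> minsep_violation E tau S"

end

theory Submission
  imports Defs
begin

fun off :: "('g \<Rightarrow> real) \<Rightarrow> 'g list \<Rightarrow> 'g \<Rightarrow> real" where
  "off E [] g = 0"
| "off E (x#xs) g = (if g = x then sum_list (map E xs) else off E xs g)"

definition cc :: "('g \<Rightarrow> real) \<Rightarrow> ('g \<Rightarrow> real) \<Rightarrow> 'g list \<Rightarrow> nat \<Rightarrow> real" where
  "cc E tau xs i = max (Max ((\<lambda>y. E (xs ! y) + tau (xs ! y)) ` {i..<length xs}))
                        (\<Sum>y = i..<length xs. E (xs ! y))"

definition nn :: "('g \<Rightarrow> nat) \<Rightarrow> 'g list \<Rightarrow> nat \<Rightarrow> real" where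
  "nn Mc xs i = (if i = 0 then real (Mc (xs ! 0)) - 1
                   else real (Mc (xs ! i)) - real (Mc (xs ! (i - 1))))"

lemma R_list_alt: "R_list Mc E tau xs = (\<Sum>i<length xs. nn Mc xs i * cc E tau xs i + E (xs ! i))"
  by (simp add: R_list_def nn_def cc_def Let_def)

lemma cc_Cons: "cc E tau (x#xs) (Suc i) = cc E tau xs i"
proof -
  have "(\<lambda>y. E ((x#xs) ! y) + tau ((x#xs) ! y)) ` {Suc i..<Suc (length xs)}
      = (\<lambda>y. E (xs ! y) + tau (xs ! y)) ` {i..<length xs}"
    by (simp only: image_Suc_atLeastLessThan[symmetric] image_image) simp
  moreover have "(\<Sum>y = Suc i..<Suc (length xs). E ((x#xs) ! y)) = (\<Sum>y = i..<length xs. E (xs ! y))"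
    by (simp only: sum.shift_bounds_Suc_ivl) simp
  ultimately show ?thesis unfolding cc_def by simp
qed

lemma sumE_nth: "(\<Sum>y = 0..<length xs. E (xs ! y)) = sum_list (map E xs)"
  by (simp add: sum_list_sum_nth)

lemma cc_ge1: "i < length xs \<Longrightarrow> E (xs ! i) + tau (xs ! i) \<le> cc E tau xs 0"
  unfolding cc_def by (rule max.coboundedI1, rule Max_ge) auto

lemma cc_ge_mem:
  fixes xs :: "'g list" and E tau :: "'g \<Rightarrow> real"
  assumes "g \<in> set xs"
  shows "E g + tau g \<le> cc E tau xs 0"
proof -
  obtain i where "i < length xs" "g = xs ! i" using assms unfolding in_set_conv_nth by blast
  then have "E (xs ! i) + tau (xs ! i) \<le> cc E tau xs 0" by (intro cc_ge1)
  then show ?thesis using \<open>g = xs ! i\<close> by simp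
qed

lemma cc_ge2: "sum_list (map E xs) \<le> cc E tau xs 0"
  unfolding cc_def sumE_nth by simp

lemma R_Cons1:
  assumes "m x = 1"
  shows "R_list m E tau (x#xs) = E x + R_list m E tau xs"
proof -
  have "R_list m E tau (x#xs) = (\<Sum>i<Suc (length xs). nn m (x#xs) i * cc E tau (x#xs) i + E ((x#xs) ! i))"
    by (simp add: R_list_alt)
  also have "\<dots> = E x + (\<Sum>i<length xs. nn m (x#xs) (Suc i) * cc E tau (x#xs) (Suc i) + E ((x#xs) ! Suc i))"
    by (subst sum.lessThan_Suc_shift) (simp add: nn_def assms)
  also have "\<dots> = E x + (\<Sum>i<length xs. nn m xs i * cc E tau xs i + E (xs ! i))"
    by (intro arg_cong2[where f="(+)"] refl sum.cong) (auto simp: cc_Cons nn_def assms)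
  finally show ?thesis by (simp add: R_list_alt)
qed

lemma R_dec:
  assumes "xs \<noteq> []" "\<forall>y\<in>set xs. m y \<ge> 1"
  shows "R_list m E tau xs = cc E tau xs 0 + R_list (\<lambda>g. m g - 1) E tau xs"
proof -
  have n: "nn m xs i = nn (\<lambda>g. m g - 1) xs i + (if i = 0 then 1 else 0)" if "i < length xs" for i
  proof -
    have "m (xs ! i) \<ge> 1" using assms(2) that by auto
    moreover have "i > 0 \<Longrightarrow> m (xs ! (i - 1)) \<ge> 1" using assms(2) that by auto
    moreover have "m (xs ! 0) \<ge> 1" using assms by (simp add: nth_mem)
    ultimately show ?thesis unfolding nn_def by (auto simp: of_nat_diff)
  qed
  have "R_list m E tau xs = (\<Sum>i<length xs. (nn (\<lambda>g. m g - 1) xs i * cc E tau xs i + E (xs ! i))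
        + (if i = 0 then cc E tau xs i else 0))"
    unfolding R_list_alt by (rule sum.cong) (auto simp: n algebra_simps)
  also have "\<dots> = R_list (\<lambda>g. m g - 1) E tau xs + cc E tau xs 0"
    unfolding sum.distrib R_list_alt using assms(1) by (simp add: sum.delta)
  finally show ?thesis by simp
qed

lemma sumE_nonneg: "\<forall>y\<in>set xs. (E :: _ \<Rightarrow> real) y > 0 \<Longrightarrow> 0 \<le> sum_list (map E xs)"
proof (induction xs)
  case (Cons a xs)
  then have "0 < E a" "0 \<le> sum_list (map E xs)" by auto
  then show ?case by simp
qed simp

lemma off_nonneg: "\<forall>y\<in>set xs. E y > 0 \<Longrightarrow> 0 \<le> off E xs g"
  by (induction xs) (auto dest: sumE_nonneg)

lemma off_le: "\<forall>y\<in>set xs. E y > 0 \<Longrightarrow> g \<in> set xs \<Longrightarrow> off E xs g + E g \<le> sum_list (map E xs)"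
  by (induction xs) (auto dest: sumE_nonneg)

lemma off_disj: "distinct xs \<Longrightarrow> \<forall>y\<in>set xs. E y > 0 \<Longrightarrow> g \<in> set xs \<Longrightarrow> g' \<in> set xs \<Longrightarrow> g \<noteq> g'
  \<Longrightarrow> off E xs g + E g \<le> off E xs g' \<or> off E xs g' + E g' \<le> off E xs g"
  by (induction xs) (auto dest: off_le)

definition disjS :: "('g \<Rightarrow> real) \<Rightarrow> ('g \<times> real) set \<Rightarrow> bool" where
  "disjS E S \<longleftrightarrow> (\<forall>g s g' s'. (g, s) \<in> S \<longrightarrow> (g', s') \<in> S \<longrightarrow> (g, s) \<noteq> (g', s')
      \<longrightarrow> s + E g \<le> s' \<or> s' + E g' \<le> s)"

definition sepS :: "('g \<Rightarrow> real) \<Rightarrow> ('g \<Rightarrow> real) \<Rightarrow> ('g \<times> real) set \<Rightarrow> bool" where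
  "sepS E tau S \<longleftrightarrow> (\<forall>g s s'. (g, s) \<in> S \<longrightarrow> (g, s') \<in> S \<longrightarrow> s < s' \<longrightarrow> s + E g + tau g \<le> s')"

definition goodL where
  "goodL m E tau xs S \<longleftrightarrow> finite S \<and> fst ` S \<subseteq> set xs \<and> (\<forall>g\<in>set xs. card {s. (g, s) \<in> S} = m g)
     \<and> disjS E S \<and> sepS E tau S \<and> (\<forall>(g, s)\<in>S. off E xs g \<le> s \<and> s + E g \<le> R_list m E tau xs)
     \<and> sum_list (map E xs) \<le> R_list m E tau xs"

lemma step1:
  assumes IH: "goodL m E tau xs S" and mx: "m x = 1" and xn: "x \<notin> set xs"
    and pos: "\<forall>y\<in>set (x#xs). E y > 0"
  shows "goodL m E tau (x#xs) (insert (x, R_list m E tau xs) S)"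
proof -
  let ?R = "R_list m E tau xs"
  have R: "R_list m E tau (x#xs) = E x + ?R" using mx by (rule R_Cons1)
  from IH have fin: "finite S" and fs: "fst ` S \<subseteq> set xs"
    and cnt: "\<forall>g\<in>set xs. card {s. (g, s) \<in> S} = m g" and dj: "disjS E S" and sp: "sepS E tau S"
    and bd: "\<forall>(g, s)\<in>S. off E xs g \<le> s \<and> s + E g \<le> ?R" and sm: "sum_list (map E xs) \<le> ?R"
    unfolding goodL_def by auto
  have xS: "(x, s) \<notin> S" for s using fs xn by force
  have c1: "{s. (x, s) \<in> insert (x, ?R) S} = {?R}" using xS by auto
  have c2: "g \<noteq> x \<Longrightarrow> {s. (g, s) \<in> insert (x, ?R) S} = {s. (g, s) \<in> S}" for g by auto
  show ?thesis unfolding goodL_def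
  proof (intro conjI)
    show "finite (insert (x, ?R) S)" using fin by simp
    show "fst ` insert (x, ?R) S \<subseteq> set (x # xs)" using fs by auto
    show "\<forall>g\<in>set (x # xs). card {s. (g, s) \<in> insert (x, ?R) S} = m g"
    proof
      fix g assume "g \<in> set (x#xs)"
      then show "card {s. (g, s) \<in> insert (x, ?R) S} = m g"
        using cnt c1 c2[of g] mx by (cases "g = x") auto
    qed
    show "disjS E (insert (x, ?R) S)"
      using dj bd pos unfolding disjS_def by (auto simp: xS)
    show "sepS E tau (insert (x, ?R) S)"
      using sp xS unfolding sepS_def by auto
    show "\<forall>(g, s)\<in>insert (x, ?R) S. off E (x # xs) g \<le> s \<and> s + E g \<le> R_list m E tau (x # xs)"
      using bd sm pos R xS by (auto split: prod.splits)
    show "sum_list (map E (x # xs)) \<le> R_list m E tau (x # xs)" using sm R by simp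
  qed
qed

lemma step2:
  assumes IH: "goodL (\<lambda>g. m g - 1) E tau xs S'" and ne: "xs \<noteq> []" and dist: "distinct xs"
    and pos: "\<forall>y\<in>set xs. E y > 0 \<and> tau y \<ge> 0 \<and> m y \<ge> 1"
  shows "goodL m E tau xs ((\<lambda>g. (g, off E xs g)) ` set xs \<union> (\<lambda>(g, s). (g, s + cc E tau xs 0)) ` S')"
proof -
  define c where "c = cc E tau xs 0"
  define m' where "m' = (\<lambda>g. m g - 1)"
  define S where "S = (\<lambda>g. (g, off E xs g)) ` set xs \<union> (\<lambda>(g, s). (g, s + c)) ` S'"
  let ?R' = "R_list m' E tau xs"
  have R: "R_list m E tau xs = c + ?R'"
    unfolding c_def m'_def using ne pos by (intro R_dec) auto
  from IH have fin: "finite S'" and fs: "fst ` S' \<subseteq> set xs"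
    and cnt: "\<forall>g\<in>set xs. card {s. (g, s) \<in> S'} = m' g" and dj: "disjS E S'" and sp: "sepS E tau S'"
    and bd: "\<forall>(g, s)\<in>S'. off E xs g \<le> s \<and> s + E g \<le> ?R'" and sm: "sum_list (map E xs) \<le> ?R'"
    unfolding goodL_def m'_def by auto
  have Epos: "\<forall>y\<in>set xs. E y > 0" using pos by auto
  have A1: "off E xs g + E g \<le> c" if "g \<in> set xs" for g
    using off_le[OF Epos that] cc_ge2[of E xs tau] unfolding c_def by linarith
  have A2: "E g + tau g \<le> c" if "g \<in> set xs" for g
    unfolding c_def by (rule cc_ge_mem[OF that])
  have c0: "0 \<le> c" using cc_ge2[of E xs tau] sumE_nonneg[OF Epos] unfolding c_def by linarith
  have A4: "0 \<le> off E xs g" for g using off_nonneg[OF Epos] .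
  have mem: "(g, s) \<in> S \<longleftrightarrow> (g \<in> set xs \<and> s = off E xs g) \<or> (g, s - c) \<in> S'" for g s
  proof -
    have sh: "(g, s) \<in> (\<lambda>(g, s). (g, s + c)) ` S' \<longleftrightarrow> (g, s - c) \<in> S'"
    proof
      assume "(g, s) \<in> (\<lambda>(g, s). (g, s + c)) ` S'"
      then obtain a b where "(a, b) \<in> S'" "(g, s) = (a, b + c)" by auto
      then show "(g, s - c) \<in> S'" by simp
    next
      assume "(g, s - c) \<in> S'"
      then have "(\<lambda>(g, s). (g, s + c)) (g, s - c) \<in> (\<lambda>(g, s). (g, s + c)) ` S'" by (rule imageI)
      then show "(g, s) \<in> (\<lambda>(g, s). (g, s + c)) ` S'" by simp
    qed
    have rd: "(g, s) \<in> (\<lambda>g. (g, off E xs g)) ` set xs \<longleftrightarrow> g \<in> set xs \<and> s = off E xs g"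
      by auto
    show ?thesis unfolding S_def Un_iff sh rd ..
  qed
  have memS': "g \<in> set xs \<and> off E xs g \<le> s \<and> s + E g \<le> ?R'" if "(g, s) \<in> S'" for g s
    using that bd fs by force
  have goal: "goodL m E tau xs S"
    unfolding goodL_def
  proof (intro conjI)
    show "finite S" unfolding S_def using fin by simp
    show "fst ` S \<subseteq> set xs" unfolding S_def using fs by auto
    show "\<forall>g\<in>set xs. card {s. (g, s) \<in> S} = m g"
    proof
      fix g assume g: "g \<in> set xs"
      have eq: "{s. (g, s) \<in> S} = insert (off E xs g) ((\<lambda>s. s + c) ` {s. (g, s) \<in> S'})"
      proof (rule set_eqI)
        fix s
        have "(\<exists>x. (g, x) \<in> S' \<and> s = x + c) \<longleftrightarrow> (g, s - c) \<in> S'"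
          by (metis add_diff_cancel_right' diff_add_cancel)
        then show "s \<in> {s. (g, s) \<in> S} \<longleftrightarrow> s \<in> insert (off E xs g) ((\<lambda>s. s + c) ` {s. (g, s) \<in> S'})"
          using g by (simp add: mem image_iff)
      qed
      have sub: "{s. (g, s) \<in> S'} \<subseteq> snd ` S'"
        by (auto intro: rev_image_eqI)
      have f: "finite {s. (g, s) \<in> S'}"
        using finite_subset[OF sub] fin by blast
      have "off E xs g \<notin> (\<lambda>s. s + c) ` {s. (g, s) \<in> S'}"
      proof
        assume "off E xs g \<in> (\<lambda>s. s + c) ` {s. (g, s) \<in> S'}"
        then obtain s where "(g, s) \<in> S'" "off E xs g = s + c" by auto
        with memS' A1[OF g] A4[of g] Epos g show False by force
      qed
      then have "card {s. (g, s) \<in> S} = Suc (card {s. (g, s) \<in> S'})"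
        unfolding eq using f by (simp add: card_image inj_on_def)
      then show "card {s. (g, s) \<in> S} = m g" using cnt g pos unfolding m'_def by auto
    qed
    show "disjS E S" unfolding disjS_def
    proof (intro allI impI)
      fix g s g' s' assume a: "(g, s) \<in> S" "(g', s') \<in> S" "(g, s) \<noteq> (g', s')"
      show "s + E g \<le> s' \<or> s' + E g' \<le> s"
      proof (cases "(g, s - c) \<in> S'")
        case True note T = this
        show ?thesis
        proof (cases "(g', s' - c) \<in> S'")
          case True
          moreover have "(g, s - c) \<noteq> (g', s' - c)" using a(3) by auto
          ultimately have "s - c + E g \<le> s' - c \<or> s' - c + E g' \<le> s - c"
            using T dj unfolding disjS_def by blast
          then show ?thesis by linarith
        next
          case False
          then have g': "g' \<in> set xs" "s' = off E xs g'" using a(2) mem by auto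
          have "off E xs g \<le> s - c" using memS'[OF T] by blast
          then show ?thesis using A1[OF g'(1)] g'(2) A4[of g] by linarith
        qed
      next
        case False
        then have g: "g \<in> set xs" "s = off E xs g" using a(1) mem by auto
        show ?thesis
        proof (cases "(g', s' - c) \<in> S'")
          case True
          have "off E xs g' \<le> s' - c" using memS'[OF True] by blast
          then show ?thesis using A1[OF g(1)] A4[of g'] g by linarith
        next
          case False
          then have "g' \<in> set xs" "s' = off E xs g'" using a(2) mem by auto
          then show ?thesis using off_disj[OF dist Epos g(1)] g a(3) by auto
        qed
      qed
    qed
    show "sepS E tau S" unfolding sepS_def
    proof (intro allI impI)
      fix g s s' assume a: "(g, s) \<in> S" "(g, s') \<in> S" "s < s'"
      show "s + E g + tau g \<le> s'"
      proof (cases "(g, s - c) \<in> S'")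
        case True note T = this
        show ?thesis
        proof (cases "(g, s' - c) \<in> S'")
          case True
          with T sp a(3) have "s - c + E g + tau g \<le> s' - c"
            unfolding sepS_def by auto
          then show ?thesis by linarith
        next
          case False
          then have g: "g \<in> set xs" "s' = off E xs g" using a(2) mem by auto
          have "off E xs g \<le> s - c" using memS'[OF T] by blast
          then show ?thesis using A1[OF g(1)] g(2) A4[of g] Epos g(1) a(3) by force
        qed
      next
        case False
        then have g: "g \<in> set xs" "s = off E xs g" using a(1) mem by auto
        show ?thesis
        proof (cases "(g, s' - c) \<in> S'")
          case True
          have "off E xs g \<le> s' - c" using memS'[OF True] by blast
          then show ?thesis using A2[OF g(1)] g by linarith
        next
          case False
          then have "s' = off E xs g" using a(2) mem by auto
          then show ?thesis using g a(3) by auto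
        qed
      qed
    qed
    have R'0: "0 \<le> ?R'" using sm sumE_nonneg[OF Epos] by linarith
    show "\<forall>(g, s)\<in>S. off E xs g \<le> s \<and> s + E g \<le> R_list m E tau xs"
    proof (intro ballI, clarify)
      fix g s assume a: "(g, s) \<in> S"
      show "off E xs g \<le> s \<and> s + E g \<le> R_list m E tau xs"
      proof (cases "(g, s - c) \<in> S'")
        case True
        then have "g \<in> set xs" "off E xs g \<le> s - c" "s - c + E g \<le> ?R'" using memS' by blast+
        then show ?thesis using R c0 by linarith
      next
        case False
        then have g: "g \<in> set xs" "s = off E xs g" using a mem by auto
        then show ?thesis using A1[OF g(1)] R R'0 by auto
      qed
    qed
    show "sum_list (map E xs) \<le> R_list m E tau xs" using sm R c0 by linarith
  qed
  then show ?thesis unfolding S_def c_def .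
qed

lemma goodL_Nil: "goodL m E tau [] {}"
  unfolding goodL_def disjS_def sepS_def by (simp add: R_list_def)

lemma list_sched:
  fixes E tau :: "'g \<Rightarrow> real"
  shows "distinct xs \<Longrightarrow> sorted (map m xs) \<Longrightarrow> \<forall>y\<in>set xs. E y > 0 \<and> tau y \<ge> 0 \<and> m y \<ge> 1
    \<Longrightarrow> \<exists>S. goodL m E tau xs S"
proof (induction xs arbitrary: m)
  case Nil
  then show ?case using goodL_Nil by blast
next
  case (Cons x xs)
  have main: "\<And>m. m x = Suc k \<Longrightarrow> sorted (map m (x#xs)) \<Longrightarrow>
      \<forall>y\<in>set (x#xs). E y > 0 \<and> tau y \<ge> 0 \<and> m y \<ge> 1 \<Longrightarrow> \<exists>S. goodL m E tau (x#xs) S" for k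
  proof (induction k)
    case (0 m)
    have "distinct xs" "x \<notin> set xs" using Cons.prems(1) by auto
    moreover have "sorted (map m xs)" using "0.prems"(2) by simp
    moreover have "\<forall>y\<in>set xs. E y > 0 \<and> tau y \<ge> 0 \<and> m y \<ge> 1" using "0.prems"(3) by simp
    ultimately obtain S where "goodL m E tau xs S" using Cons.IH by blast
    then have "goodL m E tau (x#xs) (insert (x, R_list m E tau xs) S)"
      using step1 \<open>x \<notin> set xs\<close> "0.prems" by (metis One_nat_def list.set_intros(1) set_ConsD)
    then show ?case by blast
  next
    case (Suc k m)
    define m' where "m' = (\<lambda>g. m g - 1)"
    have ge: "\<forall>y\<in>set xs. m x \<le> m y" using Suc.prems(2) by simp
    have "m' x = Suc k" using Suc.prems(1) unfolding m'_def by simp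
    moreover have "sorted (map m' (x#xs))"
      using Suc.prems(2) unfolding m'_def sorted_map
      by (rule sorted_wrt_mono_rel[rotated]) (simp add: diff_le_mono)
    moreover have "\<forall>y\<in>set (x#xs). E y > 0 \<and> tau y \<ge> 0 \<and> m' y \<ge> 1"
      using Suc.prems(1,3) ge unfolding m'_def by auto
    ultimately obtain S' where "goodL m' E tau (x#xs) S'" using Suc.IH by blast
    then have "goodL m E tau (x#xs) ((\<lambda>g. (g, off E (x#xs) g)) ` set (x#xs)
        \<union> (\<lambda>(g, s). (g, s + cc E tau (x#xs) 0)) ` S')"
      unfolding m'_def using Cons.prems(1) Suc.prems(3) by (intro step2) auto
    then show ?case by blast
  qed
  have "m x \<ge> 1" using Cons.prems(3) by simp
  then have "m x = Suc (m x - 1)" by simp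
  then show ?case using main Cons.prems by blast
qed

lemma shift_mem: "(g, s) \<in> (\<lambda>(g, s). (g, s + c)) ` A \<longleftrightarrow> (g, s - c) \<in> A"
  for c s :: real
proof
  assume "(g, s) \<in> (\<lambda>(g, s). (g, s + c)) ` A"
  then obtain a b where "(a, b) \<in> A" "(g, s) = (a, b + c)" by auto
  then show "(g, s - c) \<in> A" by simp
next
  assume "(g, s - c) \<in> A"
  then have "(\<lambda>(g, s). (g, s + c)) (g, s - c) \<in> (\<lambda>(g, s). (g, s + c)) ` A" by (rule imageI)
  then show "(g, s) \<in> (\<lambda>(g, s). (g, s + c)) ` A" by simp
qed

lemma set_sched:
  fixes E tau :: "'g \<Rightarrow> real"
  assumes fin: "finite Z" and pos: "\<forall>g\<in>Z. E g > 0 \<and> tau g \<ge> 0 \<and> Mc g \<ge> 1"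
  shows "\<exists>S. finite S \<and> fst ` S \<subseteq> Z \<and> (\<forall>g\<in>Z. card {s. (g, s) \<in> S} = Mc g)
     \<and> disjS E S \<and> sepS E tau S \<and> (\<forall>(g, s)\<in>S. 0 \<le> s \<and> s + E g \<le> R_set Mc E tau Z)
     \<and> 0 \<le> R_set Mc E tau Z"
proof -
  obtain ys where ys: "distinct ys" "set ys = Z" using finite_distinct_list[OF fin] by blast
  have ex: "\<exists>xs. distinct xs \<and> set xs = Z \<and> sorted (map Mc xs)"
    by (rule exI[of _ "sort_key Mc ys"]) (simp add: ys)
  define xs where "xs = (SOME xs. distinct xs \<and> set xs = Z \<and> sorted (map Mc xs))"
  have xs: "distinct xs" "set xs = Z" "sorted (map Mc xs)"
    using someI_ex[OF ex] unfolding xs_def by auto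
  have R: "R_set Mc E tau Z = R_list Mc E tau xs" unfolding R_set_def xs_def ..
  obtain S where S: "goodL Mc E tau xs S" using list_sched[OF xs(1,3)] pos xs(2) by blast
  have Epos: "\<forall>y\<in>set xs. E y > 0" using pos xs(2) by auto
  show ?thesis
  proof (intro exI[of _ S] conjI)
    show "finite S" "fst ` S \<subseteq> Z" "\<forall>g\<in>Z. card {s. (g, s) \<in> S} = Mc g" "disjS E S" "sepS E tau S"
      using S xs(2) unfolding goodL_def by auto
    have bd: "\<forall>(g, s)\<in>S. off E xs g \<le> s \<and> s + E g \<le> R_list Mc E tau xs"
      and sm: "sum_list (map E xs) \<le> R_list Mc E tau xs" using S unfolding goodL_def by auto
    show "\<forall>(g, s)\<in>S. 0 \<le> s \<and> s + E g \<le> R_set Mc E tau Z"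
    proof clarify
      fix g s assume "(g, s) \<in> S"
      then have "off E xs g \<le> s \<and> s + E g \<le> R_list Mc E tau xs" using bd by blast
      then show "0 \<le> s \<and> s + E g \<le> R_set Mc E tau Z"
        using off_nonneg[OF Epos, of g] unfolding R by linarith
    qed
    show "0 \<le> R_set Mc E tau Z"
      using sm sumE_nonneg[OF Epos] unfolding R by linarith
  qed
qed

lemma multi_sched:
  fixes E tau :: "'g \<Rightarrow> real" and Th :: "('g set \<times> 'p set) set"
  assumes "finite Th"
  shows "(\<forall>(Z, C)\<in>Th. finite Z) \<Longrightarrow> (\<forall>g\<in>(\<Union>(Z, C)\<in>Th. Z). E g > 0 \<and> tau g \<ge> 0 \<and> Mc g \<ge> 1) \<Longrightarrow>
    \<exists>S. finite S \<and> fst ` S \<subseteq> (\<Union>(Z, C)\<in>Th. Z)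
     \<and> (\<forall>g\<in>(\<Union>(Z, C)\<in>Th. Z). card {s. (g, s) \<in> S} = Mc g)
     \<and> disjS E S \<and> sepS E tau S
     \<and> (\<forall>(g, s)\<in>S. t0 \<le> s \<and> s + E g \<le> t0 + (\<Sum>(Z, C)\<in>Th. R_set Mc E tau Z))
     \<and> 0 \<le> (\<Sum>(Z, C)\<in>Th. R_set Mc E tau Z)"
  using assms
proof (induction Th rule: finite_induct)
  case empty
  show ?case by (intro exI[of _ "{}"]) (simp add: disjS_def sepS_def)
next
  case (insert th Th)
  obtain Z C where th: "th = (Z, C)" by (cases th)
  let ?U = "\<Union>(Z, C)\<in>Th. Z"
  let ?T = "t0 + (\<Sum>(Z, C)\<in>Th. R_set Mc E tau Z)"
  have sum: "(\<Sum>(Z, C)\<in>insert th Th. R_set Mc E tau Z) = R_set Mc E tau Z + (\<Sum>(Z, C)\<in>Th. R_set Mc E tau Z)"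
    using insert.hyps th by simp
  have U: "(\<Union>(Z, C)\<in>insert th Th. Z) = Z \<union> ?U" using th by auto
  obtain S1 where S1: "finite S1" "fst ` S1 \<subseteq> ?U" "\<forall>g\<in>?U. card {s. (g, s) \<in> S1} = Mc g"
     "disjS E S1" "sepS E tau S1" "\<forall>(g, s)\<in>S1. t0 \<le> s \<and> s + E g \<le> ?T"
     "0 \<le> (\<Sum>(Z, C)\<in>Th. R_set Mc E tau Z)"
  proof -
    have h1: "\<forall>(Z, C)\<in>Th. finite Z" using insert.prems(1) by auto
    have h2: "\<forall>g\<in>?U. E g > 0 \<and> tau g \<ge> 0 \<and> Mc g \<ge> 1" using insert.prems(2) unfolding U by blast
    from insert.IH[OF h1 h2] show ?thesis by (elim exE conjE) (rule that)
  qed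
  have finZ: "finite Z" using insert.prems th by auto
  have posZ: "\<forall>g\<in>Z. E g > 0 \<and> tau g \<ge> 0 \<and> Mc g \<ge> 1" using insert.prems(2) unfolding U by blast
  obtain S2 where S2: "finite S2" "fst ` S2 \<subseteq> Z" "\<forall>g\<in>Z. card {s. (g, s) \<in> S2} = Mc g"
     "disjS E S2" "sepS E tau S2" "\<forall>(g, s)\<in>S2. 0 \<le> s \<and> s + E g \<le> R_set Mc E tau Z"
     "0 \<le> R_set Mc E tau Z"
    using set_sched[OF finZ posZ] by blast
  define S where "S = {p \<in> S1. fst p \<notin> Z} \<union> (\<lambda>(g, s). (g, s + ?T)) ` S2"
  have mem: "(g, s) \<in> S \<longleftrightarrow> ((g, s) \<in> S1 \<and> g \<notin> Z) \<or> (g, s - ?T) \<in> S2" for g s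
    unfolding S_def Un_iff shift_mem by simp
  have b1: "t0 \<le> s \<and> s + E g \<le> ?T" if "(g, s) \<in> S1" for g s using S1(6) that by blast
  have b2: "0 \<le> s \<and> s + E g \<le> R_set Mc E tau Z \<and> g \<in> Z" if "(g, s) \<in> S2" for g s
  proof -
    have "g \<in> fst ` S2" using that by (rule rev_image_eqI) simp
    then have "g \<in> Z" using S2(2) by blast
    moreover have "0 \<le> s \<and> s + E g \<le> R_set Mc E tau Z" using S2(6) that by blast
    ultimately show ?thesis by blast
  qed
  show ?case unfolding U sum
  proof (intro exI[of _ S] conjI)
    show "finite S" unfolding S_def using S1(1) S2(1) by simp
    show "fst ` S \<subseteq> Z \<union> ?U" unfolding S_def using S1(2) S2(2) by auto
    show "\<forall>g\<in>Z \<union> ?U. card {s. (g, s) \<in> S} = Mc g"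
    proof
      fix g assume g: "g \<in> Z \<union> ?U"
      show "card {s. (g, s) \<in> S} = Mc g"
      proof (cases "g \<in> Z")
        case True
        have "{s. (g, s) \<in> S} = (\<lambda>s. s + ?T) ` {s. (g, s) \<in> S2}"
        proof (rule set_eqI)
          fix s
          have "(\<exists>x. (g, x) \<in> S2 \<and> s = x + ?T) \<longleftrightarrow> (g, s - ?T) \<in> S2"
            by (metis add_diff_cancel_right' diff_add_cancel)
          then show "s \<in> {s. (g, s) \<in> S} \<longleftrightarrow> s \<in> (\<lambda>s. s + ?T) ` {s. (g, s) \<in> S2}"
            using True by (simp add: mem image_iff)
        qed
        then have "card {s. (g, s) \<in> S} = card {s. (g, s) \<in> S2}"
          by (simp add: card_image inj_on_def)
        then show ?thesis using S2(3) True by simp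
      next
        case False
        have eq: "{s. (g, s) \<in> S} = {s. (g, s) \<in> S1}"
          using False b2 by (auto simp: mem)
        have "g \<in> ?U" using g False by blast
        then have "card {s. (g, s) \<in> S1} = Mc g" using S1(3) by blast
        then show ?thesis unfolding eq .
      qed
    qed
    show "disjS E S" unfolding disjS_def
    proof (intro allI impI)
      fix g s g' s' assume a: "(g, s) \<in> S" "(g', s') \<in> S" "(g, s) \<noteq> (g', s')"
      show "s + E g \<le> s' \<or> s' + E g' \<le> s"
      proof (cases "(g, s - ?T) \<in> S2")
        case T: True
        show ?thesis
        proof (cases "(g', s' - ?T) \<in> S2")
          case True
          moreover have "(g, s - ?T) \<noteq> (g', s' - ?T)" using a(3) by auto
          ultimately have "s - ?T + E g \<le> s' - ?T \<or> s' - ?T + E g' \<le> s - ?T"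
            using T S2(4) unfolding disjS_def by blast
          then show ?thesis by linarith
        next
          case False
          then have "(g', s') \<in> S1" using a(2) mem by auto
          then show ?thesis using b1[of g' s'] b2[OF T] by linarith
        qed
      next
        case False
        then have g: "(g, s) \<in> S1" using a(1) mem by auto
        show ?thesis
        proof (cases "(g', s' - ?T) \<in> S2")
          case True
          then show ?thesis using b1[OF g] b2[OF True] by linarith
        next
          case False
          then have "(g', s') \<in> S1" using a(2) mem by auto
          then show ?thesis using S1(4) g a(3) unfolding disjS_def by blast
        qed
      qed
    qed
    show "sepS E tau S" unfolding sepS_def
    proof (intro allI impI)
      fix g s s' assume a: "(g, s) \<in> S" "(g, s') \<in> S" "s < s'"
      show "s + E g + tau g \<le> s'"
      proof (cases "g \<in> Z")
        case True
        then have "(g, s - ?T) \<in> S2" "(g, s' - ?T) \<in> S2" using a mem by auto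
        then have "s - ?T + E g + tau g \<le> s' - ?T" using S2(5) a(3) unfolding sepS_def by auto
        then show ?thesis by linarith
      next
        case False
        then have "(g, s) \<in> S1" "(g, s') \<in> S1" using a mem b2 by auto
        then show ?thesis using S1(5) a(3) unfolding sepS_def by blast
      qed
    qed
    show "\<forall>(g, s)\<in>S. t0 \<le> s \<and> s + E g \<le> t0 + (R_set Mc E tau Z + (\<Sum>(Z, C)\<in>Th. R_set Mc E tau Z))"
    proof clarify
      fix g s assume a: "(g, s) \<in> S"
      show "t0 \<le> s \<and> s + E g \<le> t0 + (R_set Mc E tau Z + (\<Sum>(Z, C)\<in>Th. R_set Mc E tau Z))"
      proof (cases "(g, s - ?T) \<in> S2")
        case True
        then show ?thesis using b2[OF True] S1(7) by linarith
      next
        case False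
        then have "(g, s) \<in> S1" using a mem by auto
        then show ?thesis using b1[of g s] S2(7) by linarith
      qed
    qed
    show "0 \<le> R_set Mc E tau Z + (\<Sum>(Z, C)\<in>Th. R_set Mc E tau Z)" using S1(7) S2(7) by linarith
  qed
qed

theorem mainTheorem5:
  fixes Part :: "'p set set"
    and Theta :: "('g set \<times> 'p set) set"
    and xi :: "'p \<Rightarrow> 'v set"
    and path :: "'g \<Rightarrow> 'p"
    and E tau :: "'g \<Rightarrow> real"
    and Mc :: "'g \<Rightarrow> nat"
    and t0 :: real
  assumes disj: "\<forall>C1\<in>Part. \<forall>C2\<in>Part. C1 \<noteq> C2 \<longrightarrow> C1 \<inter> C2 = {}"
    and finTheta: "finite Theta"
    and cell: "\<forall>(Z, C)\<in>Theta. C \<in> Part \<and> finite Z \<and> (\<forall>g\<in>Z. path g \<in> C)"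
    and E_pos: "\<forall>g\<in>(\<Union>(Z, C)\<in>Theta. Z). E g > 0"
    and tau_nonneg: "\<forall>g\<in>(\<Union>(Z, C)\<in>Theta. Z). tau g \<ge> 0"
    and Mc_pos: "\<forall>g\<in>(\<Union>(Z, C)\<in>Theta. Z). Mc g > 0"
  shows "\<exists>S. valid_schedule xi path E tau S
           \<and> fst ` S \<subseteq> (\<Union>(Z, C)\<in>Theta. Z)
           \<and> (\<forall>g\<in>(\<Union>(Z, C)\<in>Theta. Z). card {s. (g, s) \<in> S} = Mc g)
           \<and> (\<forall>(g, s)\<in>S. t0 \<le> s \<and>
                 s + E g \<le> t0 + (\<Sum>(Z, C)\<in>Theta. R_set Mc E tau Z))"
proof -
  let ?U = "\<Union>(Z, C)\<in>Theta. Z"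
  have h1: "\<forall>(Z, C)\<in>Theta. finite Z" using cell by auto
  have h2: "\<forall>g\<in>?U. E g > 0 \<and> tau g \<ge> 0 \<and> Mc g \<ge> 1"
  proof
    fix g assume g: "g \<in> ?U"
    have "E g > 0" "tau g \<ge> 0" "Mc g > 0" using E_pos tau_nonneg Mc_pos g by blast+
    then show "E g > 0 \<and> tau g \<ge> 0 \<and> Mc g \<ge> 1" by simp
  qed
  obtain S where S: "finite S" "fst ` S \<subseteq> ?U" "\<forall>g\<in>?U. card {s. (g, s) \<in> S} = Mc g"
     "disjS E S" "sepS E tau S"
     "\<forall>(g, s)\<in>S. t0 \<le> s \<and> s + E g \<le> t0 + (\<Sum>(Z, C)\<in>Theta. R_set Mc E tau Z)"
    using multi_sched[OF finTheta h1 h2, of t0] by (elim exE conjE) blast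
  have Ep: "E g > 0" if "(g, s) \<in> S" for g s
  proof -
    have "g \<in> fst ` S" using that by (rule rev_image_eqI) simp
    then have "g \<in> ?U" using S(2) by blast
    then show ?thesis using E_pos by blast
  qed
  have nrc: "\<not> resource_conflict xi path E S"
  proof
    assume "resource_conflict xi path E S"
    then obtain g s g' s' where a: "(g, s) \<in> S" "(g', s') \<in> S" "(g, s) \<noteq> (g', s')"
      "s \<le> s'" "s' < s + E g" unfolding resource_conflict_def by blast
    then have "s + E g \<le> s' \<or> s' + E g' \<le> s" using S(4) unfolding disjS_def by blast
    then show False using a Ep[OF a(2)] by linarith
  qed
  have nmv: "\<not> minsep_violation E tau S"
  proof
    assume "minsep_violation E tau S"
    then obtain g s s'' where a: "(g, s) \<in> S" "(g, s'') \<in> S" "s < s''" "s'' - (s + E g) < tau g"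
      unfolding minsep_violation_def by blast
    then have "s + E g + tau g \<le> s''" using S(5) unfolding sepS_def by blast
    then show False using a by linarith
  qed
  show ?thesis
    using S(1,2,3,6) nrc nmv unfolding valid_schedule_def by blast
qed

end
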